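(* Let $A\in\mathbb{R}^{n\times n}$ be the weighted adjacency matrix of a strongly connected weighted directed graph on $\{1,\ldots,n\}$, let $P=D_{out}^{-1}A$, $Q=D_{in}^{-1}A^T$, let $\beta\in\mathbb{R}$, and for $\ell\ge1$ let $S^{(\ell)}=2^{-\ell}\sum_{|\Psi|=\ell}\Psi(P,Q)\Psi(P,Q)^T$. For $k\ge1$ let $S_k=\sum_{\ell=1}^k\beta^{2\ell-2}S^{(\ell)}$, so that $S_1=\tfrac12(PP^T+QQ^T)$. Then for every $k\ge2$, $$S_k=S_1+\frac{\beta^2}{2}\big(PS_{k-1}P^T+QS_{k-1}Q^T\big).$$
   Context: The graph has node set $\{1,\ldots,n\}$; $A_{ij}>0$ is the weight of the link $i\to j$ and $A_{ij}=0$ if there is no such link; strong connectivity means every node can reach every other node by a directed walk. $D_{out}=\mathrm{Diag}(\sum_j A_{1j},\ldots,\sum_j A_{nj})$ and $D_{in}=\mathrm{Diag}(\sum_j A_{j1},\ldots,\sum_j A_{jn})$. A walk pattern is a nonempty finite sequence $\Psi=\psi_1\cdots\psi_\ell$ with $\psi_k\in\{d,r\}$, $|\Psi|=\ell$; for $M,N\in\mathbb{R}^{n\times n}$, $\Psi(M,N)=X_1\cdots X_\ell$ with $X_k=M$ if $\psi_k=d$, $X_k=N$ if $\psi_k=r$. The sum $\sum_{|\Psi|=\ell}$ runs over all $2^\ell$ patterns of length $\ell$. *)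

theory Defs
  imports "HOL-Analysis.Analysis"
begin

datatype wletter = Dl | Rl

fun pat_eval :: "wletter list \<Rightarrow> real^'n^'n \<Rightarrow> real^'n^'n \<Rightarrow> real^'n^'n" where
  "pat_eval [] M N = mat 1"
| "pat_eval (x # xs) M N = (if x = Dl then M else N) ** pat_eval xs M N"

definition patterns :: "nat \<Rightarrow> wletter list set" where
  "patterns l = {xs. length xs = l}"

definition nonneg_weights :: "real^'n^'n \<Rightarrow> bool" where
  "nonneg_weights A \<longleftrightarrow> (\<forall>i j. A$i$j \<ge> 0)"

definition strongly_connected :: "real^'n^'n \<Rightarrow> bool" where
  "strongly_connected A \<longleftrightarrow> (\<forall>i j. (i, j) \<in> {(a, b). A$a$b > 0}\<^sup>*)"

definition D_out :: "real^'n^'n \<Rightarrow> real^'n^'n" where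
  "D_out A = (\<chi> i j. if i = j then (\<Sum>k\<in>UNIV. A$i$k) else 0)"

definition D_in :: "real^'n^'n \<Rightarrow> real^'n^'n" where
  "D_in A = (\<chi> i j. if i = j then (\<Sum>k\<in>UNIV. A$k$i) else 0)"

definition S_level :: "real^'n^'n \<Rightarrow> real^'n^'n \<Rightarrow> nat \<Rightarrow> real^'n^'n" where
  "S_level P Q l = (1 / 2 ^ l) *\<^sub>R
     (\<Sum>\<Psi>\<in>patterns l. pat_eval \<Psi> P Q ** transpose (pat_eval \<Psi> P Q))"

definition S_sum :: "real \<Rightarrow> real^'n^'n \<Rightarrow> real^'n^'n \<Rightarrow> nat \<Rightarrow> real^'n^'n" where
  "S_sum \<beta> P Q k = (\<Sum>l = 1..k. (\<beta> ^ (2 * l - 2)) *\<^sub>R S_level P Q l)"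

end

theory Submission
  imports Defs
begin

lemma mrdistrib: "((B + C) ** A) = (B ** A) + (C ** (A::real^'p^'m))"
  by (vector matrix_matrix_mult_def sum.distrib[symmetric] field_simps)

lemma sandwich_add: "(M::real^'n^'n) ** (X + Y) ** N = M ** X ** N + M ** Y ** N"
  by (simp add: matrix_add_ldistrib mrdistrib)

lemma sandwich_scale: "(M::real^'n^'n) ** (c *\<^sub>R X) ** N = c *\<^sub>R (M ** X ** N)"
  by (simp add: matrix_scalar_ac scalar_matrix_assoc)

lemma sandwich_sum:
  assumes "finite S"
  shows "(M::real^'n^'n) ** (\<Sum>x\<in>S. f x) ** N = (\<Sum>x\<in>S. M ** f x ** N)"
  using assms by (induction S rule: finite_induct) (auto simp: sandwich_add)

lemma patterns_Suc:
  "patterns (Suc l) = (Cons Dl) ` patterns l \<union> (Cons Rl) ` patterns l"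
  unfolding patterns_def
proof (intro set_eqI iffI)
  fix xs :: "wletter list" assume "xs \<in> {xs. length xs = Suc l}"
  then obtain y ys where "xs = y # ys" "length ys = l" by (cases xs) auto
  then show "xs \<in> Cons Dl ` {xs. length xs = l} \<union> Cons Rl ` {xs. length xs = l}"
    by (cases y) auto
qed auto

lemma finite_patterns: "finite (patterns l)"
proof -
  have u: "UNIV = {Dl, Rl}" using wletter.exhaust by auto
  have "finite (UNIV::wletter set)" by (simp add: u)
  then show ?thesis unfolding patterns_def using finite_lists_length_eq[of "UNIV::wletter set" l]
    by simp
qed

lemma S_level_Suc:
  "S_level P Q (Suc l) = (1/2) *\<^sub>R (P ** S_level P Q l ** transpose P + Q ** S_level P Q l ** transpose Q)"
proof -
  let ?g = "\<lambda>\<Psi>. pat_eval \<Psi> P Q ** transpose (pat_eval \<Psi> P Q)"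
  have d: "(Cons Dl) ` patterns l \<inter> (Cons Rl) ` patterns l = {}" by auto
  have "(\<Sum>\<Psi>\<in>patterns (Suc l). ?g \<Psi>) =
        (\<Sum>\<Psi>\<in>(Cons Dl) ` patterns l. ?g \<Psi>) + (\<Sum>\<Psi>\<in>(Cons Rl) ` patterns l. ?g \<Psi>)"
    unfolding patterns_Suc by (rule sum.union_disjoint) (auto simp: finite_patterns)
  also have "(\<Sum>\<Psi>\<in>(Cons Dl) ` patterns l. ?g \<Psi>) = (\<Sum>\<Psi>\<in>patterns l. ?g (Dl # \<Psi>))"
    by (subst sum.reindex) (auto simp: inj_on_def)
  also have "\<dots> = P ** (\<Sum>\<Psi>\<in>patterns l. ?g \<Psi>) ** transpose P"
    by (simp add: sandwich_sum finite_patterns matrix_transpose_mul matrix_mul_assoc)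
  also have "(\<Sum>\<Psi>\<in>(Cons Rl) ` patterns l. ?g \<Psi>) = (\<Sum>\<Psi>\<in>patterns l. ?g (Rl # \<Psi>))"
    by (subst sum.reindex) (auto simp: inj_on_def)
  also have "\<dots> = Q ** (\<Sum>\<Psi>\<in>patterns l. ?g \<Psi>) ** transpose Q"
    by (simp add: sandwich_sum finite_patterns matrix_transpose_mul matrix_mul_assoc)
  finally show ?thesis
    unfolding S_level_def sandwich_scale by (simp add: scaleR_right_distrib)
qed

theorem lemma2:
  fixes A :: "real^'n^'n" and \<beta> :: real and k :: nat
  assumes "nonneg_weights A"
    and "strongly_connected A"
    and "P = matrix_inv (D_out A) ** A"
    and "Q = matrix_inv (D_in A) ** transpose A"
    and "k \<ge> 2"
  shows "S_sum \<beta> P Q k = S_sum \<beta> P Q 1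
           + (\<beta>\<^sup>2 / 2) *\<^sub>R (P ** S_sum \<beta> P Q (k - 1) ** transpose P
                              + Q ** S_sum \<beta> P Q (k - 1) ** transpose Q)"
proof -
  obtain m where k: "k = Suc m" and m: "m \<ge> 1" using assms(5) by (cases k) auto
  have "S_sum \<beta> P Q k = (\<Sum>l = 1..Suc m. (\<beta> ^ (2 * l - 2)) *\<^sub>R S_level P Q l)"
    unfolding S_sum_def k ..
  also have "\<dots> = S_level P Q 1 + (\<Sum>l = Suc 1..Suc m. (\<beta> ^ (2 * l - 2)) *\<^sub>R S_level P Q l)"
    by (subst sum.atLeast_Suc_atMost) (use m in auto)
  also have "(\<Sum>l = Suc 1..Suc m. (\<beta> ^ (2 * l - 2)) *\<^sub>R S_level P Q l)
      = (\<Sum>l = 1..m. (\<beta> ^ (2 * Suc l - 2)) *\<^sub>R S_level P Q (Suc l))"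
    by (rule sum.shift_bounds_cl_Suc_ivl)
  also have "\<dots> = (\<Sum>l = 1..m. (\<beta>\<^sup>2 / 2) *\<^sub>R ((\<beta> ^ (2 * l - 2)) *\<^sub>R
        (P ** S_level P Q l ** transpose P + Q ** S_level P Q l ** transpose Q)))"
  proof (rule sum.cong[OF refl])
    fix l assume "l \<in> {1..m}"
    then obtain j where "l = Suc j" by (cases l) auto
    then have "\<beta> ^ (2 * Suc l - 2) = \<beta>\<^sup>2 * \<beta> ^ (2 * l - 2)"
      by (simp add: power2_eq_square)
    then show "(\<beta> ^ (2 * Suc l - 2)) *\<^sub>R S_level P Q (Suc l) = (\<beta>\<^sup>2 / 2) *\<^sub>R ((\<beta> ^ (2 * l - 2)) *\<^sub>R
        (P ** S_level P Q l ** transpose P + Q ** S_level P Q l ** transpose Q))"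
      by (simp add: S_level_Suc)
  qed
  also have "\<dots> = (\<beta>\<^sup>2 / 2) *\<^sub>R (P ** S_sum \<beta> P Q (k - 1) ** transpose P
                              + Q ** S_sum \<beta> P Q (k - 1) ** transpose Q)"
    unfolding S_sum_def k
    by (simp add: sandwich_sum sandwich_scale scaleR_sum_right sum.distrib scaleR_right_distrib)
  finally show ?thesis by (simp add: S_sum_def)
qed

end
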